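(* Let $\mathbb{K}$ be a field and $G$ a connected finite simple graph. Then $\mathcal{A}_G(\mathbb{K})$ is combinatorially formal: it is formal, and every arrangement whose intersection lattice is isomorphic to $L(\mathcal{A}_G(\mathbb{K}))$ is formal.
   Context: For a finite simple graph $G$ on $[n]$ and a field $\mathbb{K}$, $H_I:=\ker(\sum_{i\in I}x_i)\subseteq\mathbb{K}^n$ and $\mathcal{A}_G(\mathbb{K}):=\{H_I\mid \varnothing\neq I\subseteq[n],\ G[I]\text{ connected}\}$. An arrangement $\mathcal{A}$ with defining linear forms $\alpha_H$ ($H\in\mathcal{A}$) is formal if the space of linear relations $\{(c_H)\in\mathbb{K}^{\mathcal{A}}\mid\sum_H c_H\alpha_H=0\}$ is spanned by relations supported on sets $\mathcal{A}_X=\{H\in\mathcal{A}\mid X\subseteq H\}$ with $X$ an intersection of codimension $2$. $L(\mathcal{A})$ is the intersection lattice ordered by reverse inclusion. *)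

theory Defs
  imports "HOL-Analysis.Analysis"
begin

text \<open>Simple graphs on the finite vertex type 'n (playing the role of [n]).\<close>

definition simple_graph :: "('n \<Rightarrow> 'n \<Rightarrow> bool) \<Rightarrow> bool" where
  "simple_graph E \<longleftrightarrow> (\<forall>u v. E u v \<longrightarrow> E v u) \<and> (\<forall>u. \<not> E u u)"

definition induced_connected :: "('n \<Rightarrow> 'n \<Rightarrow> bool) \<Rightarrow> 'n set \<Rightarrow> bool" where
  "induced_connected E I \<longleftrightarrow> I \<noteq> {} \<and>
     (\<forall>u\<in>I. \<forall>v\<in>I. (u, v) \<in> {(x, y). x \<in> I \<and> y \<in> I \<and> E x y}\<^sup>*)"

definition graph_connected :: "('n \<Rightarrow> 'n \<Rightarrow> bool) \<Rightarrow> bool" where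
  "graph_connected E \<longleftrightarrow> induced_connected E UNIV"

definition lform :: "'a::field ^ 'm \<Rightarrow> 'a ^ 'm \<Rightarrow> 'a" where
  "lform a x = (\<Sum>i\<in>UNIV. a $ i * x $ i)"

definition kernel_form :: "'a::field ^ 'm \<Rightarrow> ('a ^ 'm) set" where
  "kernel_form a = {x. lform a x = 0}"

definition arrangement :: "('a::field ^ 'm) set set \<Rightarrow> bool" where
  "arrangement A \<longleftrightarrow> finite A \<and> (\<forall>H\<in>A. \<exists>a. a \<noteq> 0 \<and> H = kernel_form a)"

definition H_I :: "'n set \<Rightarrow> ('a::field ^ 'n::finite) set" where
  "H_I I = {x. (\<Sum>i\<in>I. x $ i) = 0}"

definition graphic_arr :: "('n::finite \<Rightarrow> 'n \<Rightarrow> bool) \<Rightarrow> ('a::field ^ 'n) set set" where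
  "graphic_arr E = {H_I I | I. I \<noteq> {} \<and> induced_connected E I}"

text \<open>Intersection lattice L(A) (the empty intersection is the whole space).\<close>
definition int_lattice :: "('a ^ 'm) set set \<Rightarrow> ('a ^ 'm) set set" where
  "int_lattice A = (\<lambda>B. \<Inter>B) ` Pow A"

definition codim :: "('a::field ^ 'm) set \<Rightarrow> nat" where
  "codim X = CARD('m) - vec.dim X"

definition localization :: "('a ^ 'm) set set \<Rightarrow> ('a ^ 'm) set \<Rightarrow> ('a ^ 'm) set set" where
  "localization A X = {H \<in> A. X \<subseteq> H}"

text \<open>(c_H) is a linear relation among the defining forms alpha_H, H in A
  (c is a vector in K^A, extended by 0 outside A).\<close>
definition is_relation ::
  "('a::field ^ 'm) set set \<Rightarrow> (('a ^ 'm) set \<Rightarrow> 'a ^ 'm) \<Rightarrow> (('a ^ 'm) set \<Rightarrow> 'a) \<Rightarrow> bool" where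
  "is_relation A \<alpha> c \<longleftrightarrow> (\<forall>H. H \<notin> A \<longrightarrow> c H = 0) \<and> (\<Sum>H\<in>A. c H *s \<alpha> H) = 0"

text \<open>Formality: for defining forms alpha_H of the hyperplanes, every relation lies in the
  span of the relations supported on some A_X with X an intersection of codimension 2.
  Since each such space of local relations is a subspace, their span is the set of finite
  sums of local relations.\<close>
definition formal :: "('a::field ^ 'm) set set \<Rightarrow> bool" where
  "formal A \<longleftrightarrow>
    (\<forall>\<alpha>. (\<forall>H\<in>A. \<alpha> H \<noteq> 0 \<and> H = kernel_form (\<alpha> H)) \<longrightarrow>
      (\<forall>c. is_relation A \<alpha> c \<longrightarrow>
        (\<exists>S d. finite S \<and> S \<subseteq> {X \<in> int_lattice A. codim X = 2} \<and>
           (\<forall>X\<in>S. is_relation A \<alpha> (d X) \<and>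
                   (\<forall>H. d X H \<noteq> 0 \<longrightarrow> H \<in> localization A X)) \<and>
           (\<forall>H. c H = (\<Sum>X\<in>S. d X H)))))"

definition lattice_iso :: "('a ^ 'm) set set \<Rightarrow> ('b ^ 'k) set set \<Rightarrow> bool" where
  "lattice_iso A B \<longleftrightarrow> (\<exists>f. bij_betw f (int_lattice A) (int_lattice B) \<and>
     (\<forall>X\<in>int_lattice A. \<forall>Y\<in>int_lattice A. X \<subseteq> Y \<longleftrightarrow> f X \<subseteq> f Y))"

end

theory Submission
  imports Defs
begin

lemma lform_add_right: "lform a (x + y) = lform a x + lform a y"
  by (simp add: lform_def sum.distrib distrib_left)
lemma lform_diff_right: "lform a (x - y) = lform a x - lform a y"
  by (simp add: lform_def sum_subtractf right_diff_distrib)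
lemma lform_scale_right: "lform a (c *s x) = c * lform a x"
  by (simp add: lform_def sum_distrib_left mult.left_commute)
lemma lform_add_left: "lform (a + b) x = lform a x + lform b x"
  by (simp add: lform_def sum.distrib distrib_right)
lemma lform_scale_left: "lform (c *s a) x = c * lform a x"
  by (simp add: lform_def sum_distrib_left mult.assoc)
lemma lform_zero_left: "lform 0 x = 0"
  by (simp add: lform_def)
lemma lform_sum_left: "finite F \<Longrightarrow> lform (\<Sum>H\<in>F. c H *s a H) x = (\<Sum>H\<in>F. c H * lform (a H) x)"
  by (induction F rule: finite_induct) (simp_all add: lform_zero_left lform_add_left lform_scale_left)
lemma lform_axis: "lform a (axis i 1) = a $ i"
  by (simp add: lform_def axis_def if_distrib cong: if_cong)
lemma lform_ext: "(\<And>x. lform a x = lform b x) \<Longrightarrow> a = b"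
  by (metis lform_axis vec_eq_iff)

lemma lform_nonzero: "(a::'a::field^'m) \<noteq> 0 \<Longrightarrow> \<exists>x. lform a x \<noteq> 0"
  by (metis lform_axis vec_eq_iff zero_index)

lemma ker_sub_prop:
  fixes u v :: "'a::field^'m"
  assumes "lform u x \<noteq> 0" "kernel_form u \<subseteq> kernel_form v"
  shows "v = (lform v x / lform u x) *s u"
proof (rule lform_ext)
  fix y
  let ?y = "y - (lform u y / lform u x) *s x"
  have "lform u ?y = 0" using assms(1) by (simp add: lform_diff_right lform_scale_right)
  hence "lform v ?y = 0" using assms(2) by (auto simp: kernel_form_def)
  hence "lform v y = (lform u y / lform u x) * lform v x" by (simp add: lform_diff_right lform_scale_right)
  thus "lform v y = lform ((lform v x / lform u x) *s u) y"
    by (simp add: lform_scale_left)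
qed

lemma ker_sub_eq:
  fixes u v :: "'a::field^'m"
  assumes "u \<noteq> 0" "v \<noteq> 0" "kernel_form u \<subseteq> kernel_form v"
  shows "kernel_form u = kernel_form v"
proof -
  obtain x where x: "lform u x \<noteq> 0" using lform_nonzero[OF assms(1)] by blast
  define k where "k = lform v x / lform u x"
  have v: "v = k *s u" using ker_sub_prop[OF x assms(3)] k_def by simp
  have "k \<noteq> 0" using assms(2) v by auto
  then show ?thesis using v by (auto simp: kernel_form_def lform_scale_left)
qed

lemma ker_diff_witness:
  fixes u v :: "'a::field^'m"
  assumes "u \<noteq> 0" "v \<noteq> 0" "kernel_form u \<noteq> kernel_form v"
  shows "\<exists>z. lform u z = 0 \<and> lform v z \<noteq> 0"
  using ker_sub_eq[OF assms(1,2)] assms(3) by (auto simp: kernel_form_def)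

lemma ker_int_span:
  fixes u v w :: "'a::field^'m"
  assumes "u \<noteq> 0" "v \<noteq> 0" "kernel_form u \<noteq> kernel_form v"
    and "kernel_form u \<inter> kernel_form v \<subseteq> kernel_form w"
  shows "\<exists>a b. w = a *s u + b *s v"
proof -
  obtain z where z: "lform u z = 0" "lform v z \<noteq> 0" using ker_diff_witness[OF assms(1-3)] by blast
  obtain x where x: "lform v x = 0" "lform u x \<noteq> 0" using ker_diff_witness[OF assms(2,1)] assms(3) by metis
  define a where "a = lform w x / lform u x"
  define b where "b = lform w z / lform v z"
  have "w = a *s u + b *s v"
  proof (rule lform_ext)
    fix y
    let ?y = "y - (lform u y / lform u x) *s x - (lform v y / lform v z) *s z"
    have "lform u ?y = 0" "lform v ?y = 0" using x z by (simp_all add: lform_diff_right lform_scale_right)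
    hence "lform w ?y = 0" using assms(4) by (auto simp: kernel_form_def)
    hence "lform w y - lform u y * lform w x / lform u x = lform v y * lform w z / lform v z"
      by (simp add: lform_diff_right lform_scale_right)
    hence "lform w y = lform u y * lform w x / lform u x + lform v y * lform w z / lform v z"
      by (metis diff_eq_eq add.commute)
    thus "lform w y = lform (a *s u + b *s v) y"
      by (simp add: lform_add_left lform_scale_left a_def b_def mult.commute)
  qed
  thus ?thesis by blast
qed

lemma subspace_ker: "vec.subspace (kernel_form (u::'a::field^'m))"
  unfolding vec.subspace_def kernel_form_def
  by (auto simp: lform_add_right lform_scale_right lform_zero_left) (simp add: lform_def)

lemma dim_restrict:
  fixes S :: "('a::field^'m) set"
  assumes S: "vec.subspace S" and zS: "z \<in> S" and vz: "lform v z \<noteq> 0"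
  shows "vec.dim S = vec.dim (S \<inter> kernel_form v) + 1"
proof -
  let ?T = "S \<inter> kernel_form v"
  have sT: "vec.subspace ?T" using S subspace_ker vec.subspace_inter by blast
  have sZ: "vec.subspace (vec.span {z})" by (rule vec.subspace_span)
  have sum: "{x + y |x y. x \<in> ?T \<and> y \<in> vec.span {z}} = S"
  proof
    show "{x + y |x y. x \<in> ?T \<and> y \<in> vec.span {z}} \<subseteq> S"
    proof safe
      fix x y assume "x \<in> S" "y \<in> vec.span {z}"
      then obtain k where "y = k *s z" by (auto simp: vec.span_singleton)
      then show "x + y \<in> S" using \<open>x \<in> S\<close> zS S by (simp add: vec.subspace_add vec.subspace_scale)
    qed
  next
    show "S \<subseteq> {x + y |x y. x \<in> ?T \<and> y \<in> vec.span {z}}"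
    proof
      fix y assume yS: "y \<in> S"
      let ?k = "lform v y / lform v z"
      have "y - ?k *s z \<in> ?T" using yS zS S vz
        by (auto simp: kernel_form_def lform_diff_right lform_scale_right intro!: vec.subspace_diff vec.subspace_scale)
      moreover have "?k *s z \<in> vec.span {z}" by (simp add: vec.span_base vec.span_scale)
      ultimately show "y \<in> {x + y |x y. x \<in> ?T \<and> y \<in> vec.span {z}}"
        by (metis (mono_tags, lifting) diff_add_cancel mem_Collect_eq)
    qed
  qed
  have int: "?T \<inter> vec.span {z} \<subseteq> {0}"
  proof
    fix y assume "y \<in> ?T \<inter> vec.span {z}"
    then obtain k where "y = k *s z" "lform v y = 0" by (auto simp: vec.span_singleton kernel_form_def)
    then show "y \<in> {0}" using vz by (simp add: lform_scale_right)
  qed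
  have z0: "z \<noteq> 0" using vz by (auto simp: lform_def)
  have "vec.dim S + vec.dim (?T \<inter> vec.span {z}) = vec.dim ?T + vec.dim (vec.span {z})"
    using vec.dim_sums_Int[OF sT sZ] sum by simp
  moreover have "vec.dim (?T \<inter> vec.span {z}) = 0" using int vec.dim_eq_0 by blast
  ultimately show ?thesis using z0 by simp
qed

lemma codim2:
  fixes u v :: "'a::field^'m"
  assumes "u \<noteq> 0" "v \<noteq> 0" "kernel_form u \<noteq> kernel_form v"
  shows "codim (kernel_form u \<inter> kernel_form v) = 2"
proof -
  obtain z where z: "lform u z = 0" "lform v z \<noteq> 0" using ker_diff_witness[OF assms(1-3)] by blast
  obtain x where x: "lform u x \<noteq> 0" using lform_nonzero[OF assms(1)] by blast
  have d1: "vec.dim (UNIV::('a^'m) set) = vec.dim (kernel_form u) + 1"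
    using dim_restrict[OF vec.subspace_UNIV _ x] by simp
  have d2: "vec.dim (kernel_form u) = vec.dim (kernel_form u \<inter> kernel_form v) + 1"
    using dim_restrict[OF subspace_ker _ z(2)] z(1) by (simp add: kernel_form_def)
  show ?thesis using d1 d2 vec_dim_card[where 'a='a and 'n='m] by (simp add: codim_def)
qed

definition dec :: "('a::field^'m) set set \<Rightarrow> (('a^'m) set \<Rightarrow> 'a^'m) \<Rightarrow> (('a^'m) set \<Rightarrow> 'a) \<Rightarrow> bool" where
  "dec B \<alpha> c \<longleftrightarrow> (\<exists>S d. finite S \<and> S \<subseteq> {X \<in> int_lattice B. codim X = 2} \<and>
           (\<forall>X\<in>S. is_relation B \<alpha> (d X) \<and>
                   (\<forall>H. d X H \<noteq> 0 \<longrightarrow> H \<in> localization B X)) \<and>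
           (\<forall>H. c H = (\<Sum>X\<in>S. d X H)))"

lemma formal_dec: "formal B \<longleftrightarrow> (\<forall>\<alpha>. (\<forall>H\<in>B. \<alpha> H \<noteq> 0 \<and> H = kernel_form (\<alpha> H)) \<longrightarrow>
      (\<forall>c. is_relation B \<alpha> c \<longrightarrow> dec B \<alpha> c))"
  unfolding formal_def dec_def by simp

lemma dec_zero: "dec B \<alpha> (\<lambda>H. 0)"
  unfolding dec_def by (rule exI[of _ "{}"]) simp

lemma dec_local: "X \<in> int_lattice B \<Longrightarrow> codim X = 2 \<Longrightarrow> is_relation B \<alpha> c \<Longrightarrow>
   (\<forall>H. c H \<noteq> 0 \<longrightarrow> H \<in> localization B X) \<Longrightarrow> dec B \<alpha> c"
  unfolding dec_def by (rule exI[of _ "{X}"], rule exI[of _ "\<lambda>_. c"]) simp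

lemma is_relation_scale: "is_relation B \<alpha> c \<Longrightarrow> is_relation B \<alpha> (\<lambda>H. k * c H)"
proof -
  assume a: "is_relation B \<alpha> c"
  have "(\<Sum>H\<in>B. (k * c H) *s \<alpha> H) = k *s (\<Sum>H\<in>B. c H *s \<alpha> H)"
    by (simp add: vec.scale_sum_right)
  then show ?thesis using a unfolding is_relation_def by simp
qed

lemma is_relation_add: "is_relation B \<alpha> c \<Longrightarrow> is_relation B \<alpha> c' \<Longrightarrow> is_relation B \<alpha> (\<lambda>H. c H + c' H)"
  unfolding is_relation_def
  by (simp add: vec.scale_left_distrib sum.distrib)

lemma is_relation_diff: "is_relation B \<alpha> c \<Longrightarrow> is_relation B \<alpha> c' \<Longrightarrow> is_relation B \<alpha> (\<lambda>H. c H - c' H)"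
  unfolding is_relation_def
  by (simp add: vec.scale_left_diff_distrib sum_subtractf)

lemma dec_scale: assumes "dec B \<alpha> c" shows "dec B \<alpha> (\<lambda>H. k * c H)"
proof -
  obtain S d where S: "finite S" "S \<subseteq> {X \<in> int_lattice B. codim X = 2}"
    "\<forall>X\<in>S. is_relation B \<alpha> (d X) \<and> (\<forall>H. d X H \<noteq> 0 \<longrightarrow> H \<in> localization B X)"
    "\<forall>H. c H = (\<Sum>X\<in>S. d X H)" using assms unfolding dec_def by blast
  show ?thesis unfolding dec_def
    apply (rule exI[of _ S], rule exI[of _ "\<lambda>X H. k * d X H"])
    using S by (simp add: is_relation_scale sum_distrib_left)
qed

lemma dec_add: assumes "dec B \<alpha> c" "dec B \<alpha> c'" shows "dec B \<alpha> (\<lambda>H. c H + c' H)"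
proof -
  obtain S d where S: "finite S" "S \<subseteq> {X \<in> int_lattice B. codim X = 2}"
    "\<forall>X\<in>S. is_relation B \<alpha> (d X) \<and> (\<forall>H. d X H \<noteq> 0 \<longrightarrow> H \<in> localization B X)"
    "\<forall>H. c H = (\<Sum>X\<in>S. d X H)" using assms(1) unfolding dec_def by blast
  obtain S' d' where S': "finite S'" "S' \<subseteq> {X \<in> int_lattice B. codim X = 2}"
    "\<forall>X\<in>S'. is_relation B \<alpha> (d' X) \<and> (\<forall>H. d' X H \<noteq> 0 \<longrightarrow> H \<in> localization B X)"
    "\<forall>H. c' H = (\<Sum>X\<in>S'. d' X H)" using assms(2) unfolding dec_def by blast
  define D where "D = (\<lambda>X H. (if X \<in> S then d X H else 0) + (if X \<in> S' then d' X H else 0))"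
  have rel0: "is_relation B \<alpha> (\<lambda>H. 0)" by (simp add: is_relation_def)
  have relD: "is_relation B \<alpha> (D X)" if "X \<in> S \<union> S'" for X
    unfolding D_def
    apply (rule is_relation_add)
    using S(3) S'(3) rel0 by (cases "X \<in> S"; simp; cases "X \<in> S'"; simp)+
  have locD: "\<forall>H. D X H \<noteq> 0 \<longrightarrow> H \<in> localization B X" if "X \<in> S \<union> S'" for X
  proof (intro allI impI)
    fix H assume "D X H \<noteq> 0"
    then have "(X \<in> S \<and> d X H \<noteq> 0) \<or> (X \<in> S' \<and> d' X H \<noteq> 0)" unfolding D_def
      by (cases "X \<in> S"; cases "X \<in> S'"; auto)
    then show "H \<in> localization B X" using S(3) S'(3) by blast
  qed
  have sumD: "c H + c' H = (\<Sum>X\<in>S \<union> S'. D X H)" for H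
  proof -
    have "(\<Sum>X\<in>S \<union> S'. D X H) = (\<Sum>X\<in>S \<union> S'. if X \<in> S then d X H else 0) + (\<Sum>X\<in>S \<union> S'. if X \<in> S' then d' X H else 0)"
      unfolding D_def by (simp add: sum.distrib)
    also have "\<dots> = (\<Sum>X\<in>S. d X H) + (\<Sum>X\<in>S'. d' X H)"
      using S(1) S'(1) by (simp add: sum.If_cases Int_absorb1 Int_absorb2)
    finally show ?thesis using S(4) S'(4) by simp
  qed
  show ?thesis unfolding dec_def
    apply (rule exI[of _ "S \<union> S'"], rule exI[of _ D])
    apply (intro conjI)
    subgoal using S(1) S'(1) by simp
    subgoal using S(2) S'(2) by (simp only: Un_subset_iff)
    subgoal using relD locD by blast
    subgoal using sumD by blast
    done
qed

lemma dec_sum: "finite F \<Longrightarrow> (\<And>i. i \<in> F \<Longrightarrow> dec B \<alpha> (f i)) \<Longrightarrow> dec B \<alpha> (\<lambda>H. \<Sum>i\<in>F. f i H)"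
proof (induction F rule: finite_induct)
  case empty then show ?case by (simp add: dec_zero)
next
  case (insert x F)
  then show ?case using dec_add[of B \<alpha> "f x" "\<lambda>H. \<Sum>i\<in>F. f i H"] by simp
qed

lemma dec_rel: assumes "dec B \<alpha> c" shows "is_relation B \<alpha> c"
proof -
  obtain S d where S: "finite S"
    "\<forall>X\<in>S. is_relation B \<alpha> (d X) \<and> (\<forall>H. d X H \<noteq> 0 \<longrightarrow> H \<in> localization B X)"
    "\<forall>H. c H = (\<Sum>X\<in>S. d X H)" using assms unfolding dec_def by blast
  have "c = (\<lambda>H. \<Sum>X\<in>S. d X H)" using S(3) by auto
  moreover have "is_relation B \<alpha> (\<lambda>H. \<Sum>X\<in>S. d X H)"
    using S(1,2)
  proof (induction S rule: finite_induct)
    case empty then show ?case by (simp add: is_relation_def)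
  next
    case (insert x F)
    then show ?case using is_relation_add[of B \<alpha> "d x" "\<lambda>H. \<Sum>X\<in>F. d X H"] by simp
  qed
  ultimately show ?thesis by simp
qed

definition ee :: "'b \<Rightarrow> 'b \<Rightarrow> 'a::field" where "ee H K = (if K = H then 1 else 0)"

lemma local_rel:
  fixes B :: "('a::field^'m) set set"
  assumes fin: "finite B" and al: "\<forall>H\<in>B. \<alpha> H \<noteq> 0 \<and> H = kernel_form (\<alpha> H)"
    and H: "H \<in> B" and H1: "H1 \<in> B" and H2: "H2 \<in> B" and ne: "H1 \<noteq> H2" and sub: "H1 \<inter> H2 \<subseteq> H"
  shows "\<exists>a b. dec B \<alpha> (\<lambda>K. ee H K - a * ee H1 K - b * ee H2 K)"
proof -
  have ne': "kernel_form (\<alpha> H1) \<noteq> kernel_form (\<alpha> H2)" using al H1 H2 ne by metis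
  have sub': "kernel_form (\<alpha> H1) \<inter> kernel_form (\<alpha> H2) \<subseteq> kernel_form (\<alpha> H)" using al H1 H2 H sub by metis
  obtain a b where ab: "\<alpha> H = a *s \<alpha> H1 + b *s \<alpha> H2"
    using ker_int_span[OF _ _ ne' sub'] al H1 H2 by metis
  define r where "r = (\<lambda>K. ee H K - a * ee H1 K - b * ee H2 K)"
  have rs: "r K *s \<alpha> K = (if K = H then \<alpha> H else 0) - (if K = H1 then a *s \<alpha> H1 else 0) - (if K = H2 then b *s \<alpha> H2 else 0)" for K
    by (simp add: r_def ee_def vec.scale_left_diff_distrib)
  have "(\<Sum>K\<in>B. r K *s \<alpha> K) = \<alpha> H - a *s \<alpha> H1 - b *s \<alpha> H2"
    unfolding rs using fin H H1 H2 by (simp add: sum_subtractf)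
  also have "\<dots> = 0" using ab by simp
  finally have rel: "is_relation B \<alpha> r" unfolding is_relation_def using H H1 H2
    by (auto simp: r_def ee_def)
  let ?X = "H1 \<inter> H2"
  have X: "?X \<in> int_lattice B" unfolding int_lattice_def
    by (rule image_eqI[of _ _ "{H1, H2}"]) (use H1 H2 in auto)
  have cX: "codim ?X = 2" using codim2[OF _ _ ne'] al H1 H2 by metis
  have loc: "\<forall>K. r K \<noteq> 0 \<longrightarrow> K \<in> localization B ?X"
    using H H1 H2 sub by (auto simp: r_def ee_def localization_def)
  show ?thesis using dec_local[OF X cX rel loc] r_def by blast
qed

lemma formal_criterion:
  fixes B :: "('a::field^'m) set set" and \<psi> :: "'i \<Rightarrow> ('a^'m) set" and \<rho> :: "'i \<Rightarrow> nat"
  assumes fin: "finite B" and BI: "B = \<psi> ` Idx" "BI \<subseteq> Idx"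
    and indep: "\<And>\<alpha> g. (\<forall>H\<in>B. \<alpha> H \<noteq> 0 \<and> H = kernel_form (\<alpha> H)) \<Longrightarrow> is_relation B \<alpha> g \<Longrightarrow>
        (\<forall>H. g H \<noteq> 0 \<longrightarrow> H \<in> \<psi> ` BI) \<Longrightarrow> \<forall>H. g H = 0"
    and step: "\<And>i. i \<in> Idx - BI \<Longrightarrow> \<exists>j k. j \<in> Idx \<and> k \<in> Idx \<and> \<rho> j < \<rho> i \<and> \<rho> k < \<rho> i \<and>
        \<psi> j \<noteq> \<psi> k \<and> \<psi> j \<inter> \<psi> k \<subseteq> \<psi> i"
  shows "formal B"
  unfolding formal_dec
proof (intro allI impI)
  fix \<alpha> c
  assume al: "\<forall>H\<in>B. \<alpha> H \<noteq> 0 \<and> H = kernel_form (\<alpha> H)" and c: "is_relation B \<alpha> c"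
  have claim: "\<forall>i\<in>Idx. \<rho> i = n \<longrightarrow> (\<exists>g. (\<forall>K. g K \<noteq> 0 \<longrightarrow> K \<in> \<psi> ` BI) \<and> dec B \<alpha> (\<lambda>K. ee (\<psi> i) K - g K))" for n
  proof (induction n rule: less_induct)
    case (less n)
    show ?case
    proof (intro ballI impI)
      fix i assume i: "i \<in> Idx" and rn: "\<rho> i = n"
      show "\<exists>g. (\<forall>K. g K \<noteq> 0 \<longrightarrow> K \<in> \<psi> ` BI) \<and> dec B \<alpha> (\<lambda>K. ee (\<psi> i) K - g K)"
      proof (cases "i \<in> BI")
        case True
        then show ?thesis using dec_zero[of B \<alpha>]
          by (intro exI[of _ "ee (\<psi> i)"]) (auto simp: ee_def)
      next
        case False
        then obtain j k where jk: "j \<in> Idx" "k \<in> Idx" "\<rho> j < \<rho> i" "\<rho> k < \<rho> i"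
          "\<psi> j \<noteq> \<psi> k" "\<psi> j \<inter> \<psi> k \<subseteq> \<psi> i" using step i by blast
        obtain a b where r: "dec B \<alpha> (\<lambda>K. ee (\<psi> i) K - a * ee (\<psi> j) K - b * ee (\<psi> k) K)"
          using local_rel[OF fin al _ _ _ jk(5,6)] i jk(1,2) BI(1) by blast
        obtain g1 where g1: "\<forall>K. g1 K \<noteq> 0 \<longrightarrow> K \<in> \<psi> ` BI" "dec B \<alpha> (\<lambda>K. ee (\<psi> j) K - g1 K)"
          using less[of "\<rho> j"] jk rn by blast
        obtain g2 where g2: "\<forall>K. g2 K \<noteq> 0 \<longrightarrow> K \<in> \<psi> ` BI" "dec B \<alpha> (\<lambda>K. ee (\<psi> k) K - g2 K)"
          using less[of "\<rho> k"] jk rn by blast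
        have d: "dec B \<alpha> (\<lambda>K. (ee (\<psi> i) K - a * ee (\<psi> j) K - b * ee (\<psi> k) K)
               + (a * (ee (\<psi> j) K - g1 K) + b * (ee (\<psi> k) K - g2 K)))"
          by (intro dec_add r dec_scale g1(2) g2(2))
        have eq: "(\<lambda>K. (ee (\<psi> i) K - a * ee (\<psi> j) K - b * ee (\<psi> k) K)
               + (a * (ee (\<psi> j) K - g1 K) + b * (ee (\<psi> k) K - g2 K)))
             = (\<lambda>K. ee (\<psi> i) K - (a * g1 K + b * g2 K))"
          by (simp add: algebra_simps)
        show ?thesis
          apply (rule exI[of _ "\<lambda>K. a * g1 K + b * g2 K"])
          using d eq g1(1) g2(1) by (metis (no_types, lifting) add.right_neutral mult_zero_right)
      qed
    qed
  qed
  have "\<forall>H\<in>B. \<exists>g. (\<forall>K. g K \<noteq> 0 \<longrightarrow> K \<in> \<psi> ` BI) \<and> dec B \<alpha> (\<lambda>K. ee H K - g K)"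
    using claim BI(1) by blast
  then obtain G where G: "\<And>H. H \<in> B \<Longrightarrow> (\<forall>K. G H K \<noteq> 0 \<longrightarrow> K \<in> \<psi> ` BI) \<and> dec B \<alpha> (\<lambda>K. ee H K - G H K)"
    by metis
  define h where "h = (\<lambda>K. \<Sum>H\<in>B. c H * (ee H K - G H K))"
  have dh: "dec B \<alpha> h" unfolding h_def
    by (rule dec_sum[OF fin]) (use G dec_scale in blast)
  have ce: "c K = (\<Sum>H\<in>B. c H * ee H K)" for K
  proof -
    have "(\<Sum>H\<in>B. c H * ee H K) = (\<Sum>H\<in>B. if K = H then c H else 0)"
      by (rule sum.cong) (auto simp: ee_def)
    then show ?thesis using c fin by (cases "K \<in> B") (auto simp: is_relation_def)
  qed
  have gst: "c K - h K = (\<Sum>H\<in>B. c H * G H K)" for K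
    unfolding h_def ce[of K] by (simp add: sum_subtractf[symmetric] algebra_simps)
  have relg: "is_relation B \<alpha> (\<lambda>K. c K - h K)" by (rule is_relation_diff[OF c dec_rel[OF dh]])
  have suppg: "\<forall>K. c K - h K \<noteq> 0 \<longrightarrow> K \<in> \<psi> ` BI"
  proof (intro allI impI)
    fix K assume "c K - h K \<noteq> 0"
    then obtain H where "H \<in> B" "G H K \<noteq> 0" unfolding gst by (metis (no_types, lifting) mult_zero_right sum.neutral)
    then show "K \<in> \<psi> ` BI" using G by blast
  qed
  have "\<forall>K. c K - h K = 0" using indep[OF al relg suppg] .
  then have "c = h" by auto
  then show "dec B \<alpha> c" using dh by simp
qed

lemma int_lattice_I: "S \<subseteq> A \<Longrightarrow> \<Inter>S \<in> int_lattice A"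
  unfolding int_lattice_def by (rule image_eqI[of _ _ S]) auto

lemma int_lattice_canon: assumes "X \<in> int_lattice B" shows "X = \<Inter>{H \<in> B. X \<subseteq> H}"
proof -
  obtain P where P: "P \<subseteq> B" "X = \<Inter>P" using assms unfolding int_lattice_def by auto
  have "P \<subseteq> {H \<in> B. X \<subseteq> H}" using P by blast
  then have "\<Inter>{H \<in> B. X \<subseteq> H} \<subseteq> X" unfolding P(2) by (rule Inter_anti_mono)
  moreover have "X \<subseteq> \<Inter>{H \<in> B. X \<subseteq> H}" by (rule Inter_greatest) simp
  ultimately show ?thesis by (rule subset_antisym[rotated])
qed

lemma int_lattice_Inter: assumes "T \<subseteq> int_lattice B" shows "\<Inter>T \<in> int_lattice B"
proof -
  let ?Q = "{H \<in> B. \<Inter>T \<subseteq> H}"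
  have "\<Inter>?Q \<subseteq> X" if X: "X \<in> T" for X
  proof -
    have eq: "X = \<Inter>{H \<in> B. X \<subseteq> H}" using int_lattice_canon[OF subsetD[OF assms X]] .
    have "{H \<in> B. X \<subseteq> H} \<subseteq> ?Q" using X by blast
    then have "\<Inter>?Q \<subseteq> \<Inter>{H \<in> B. X \<subseteq> H}" by (rule Inter_anti_mono)
    then show ?thesis using eq by simp
  qed
  then have "\<Inter>?Q \<subseteq> \<Inter>T" by (rule Inter_greatest)
  moreover have "\<Inter>T \<subseteq> \<Inter>?Q" by (rule Inter_greatest) simp
  ultimately have "\<Inter>T = \<Inter>?Q" by (rule subset_antisym[rotated])
  then show ?thesis using int_lattice_I[of ?Q B] by auto
qed

lemma arr_not_UNIV: "arrangement A \<Longrightarrow> H \<in> A \<Longrightarrow> H \<noteq> UNIV"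
proof
  assume a: "arrangement A" "H \<in> A" "H = UNIV"
  then obtain u where u: "u \<noteq> 0" "H = kernel_form u" unfolding arrangement_def by blast
  obtain x where "lform u x \<noteq> 0" using lform_nonzero[OF u(1)] by blast
  then show False using a(3) u(2) unfolding kernel_form_def by auto
qed

lemma arr_sub_eq: assumes "arrangement A" "H \<in> A" "H' \<in> A" "H \<subseteq> H'" shows "H = H'"
proof -
  obtain u where u: "u \<noteq> 0" "H = kernel_form u" using assms(1,2) unfolding arrangement_def by blast
  obtain v where v: "v \<noteq> 0" "H' = kernel_form v" using assms(1,3) unfolding arrangement_def by blast
  show ?thesis using ker_sub_eq[OF u(1) v(1)] u(2) v(2) assms(4) by simp
qed

lemma lattice_below: assumes "X \<in> int_lattice A" "X \<noteq> UNIV" shows "\<exists>H\<in>A. X \<subseteq> H"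
proof -
  obtain P where P: "P \<subseteq> A" "X = \<Inter>P" using assms(1) unfolding int_lattice_def by auto
  then obtain H where "H \<in> P" using assms(2) by auto
  then show ?thesis using P by blast
qed

locale liso =
  fixes A :: "('a::field^'n) set set" and B :: "('b::field^'m) set set" and f
  assumes arrA: "arrangement A" and arrB: "arrangement B"
    and bij: "bij_betw f (int_lattice A) (int_lattice B)"
    and ord: "\<forall>X\<in>int_lattice A. \<forall>Y\<in>int_lattice A. X \<subseteq> Y \<longleftrightarrow> f X \<subseteq> f Y"
begin

lemma A_lat: "H \<in> A \<Longrightarrow> H \<in> int_lattice A"
  using int_lattice_I[of "{H}" A] by simp
lemma B_lat: "H \<in> B \<Longrightarrow> H \<in> int_lattice B"
  using int_lattice_I[of "{H}" B] by simp

lemma f_in: "X \<in> int_lattice A \<Longrightarrow> f X \<in> int_lattice B"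
  using bij by (auto simp: bij_betw_def)

lemma f_surj: "Y \<in> int_lattice B \<Longrightarrow> \<exists>X\<in>int_lattice A. f X = Y"
  using bij unfolding bij_betw_def by (metis imageE)

lemma f_inj: "X \<in> int_lattice A \<Longrightarrow> Y \<in> int_lattice A \<Longrightarrow> f X = f Y \<Longrightarrow> X = Y"
  using bij by (auto simp: bij_betw_def inj_on_def)

lemma ordD: "X \<in> int_lattice A \<Longrightarrow> Y \<in> int_lattice A \<Longrightarrow> X \<subseteq> Y \<Longrightarrow> f X \<subseteq> f Y"
  using ord by blast
lemma ordI: "X \<in> int_lattice A \<Longrightarrow> Y \<in> int_lattice A \<Longrightarrow> f X \<subseteq> f Y \<Longrightarrow> X \<subseteq> Y"
  using ord by blast

lemma f_meet: assumes S: "S \<subseteq> A" shows "f (\<Inter>S) = \<Inter>(f ` S)"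
proof
  show "f (\<Inter>S) \<subseteq> \<Inter>(f ` S)"
  proof (rule Inter_greatest)
    fix Y assume "Y \<in> f ` S"
    then obtain H where H: "H \<in> S" "Y = f H" by blast
    show "f (\<Inter>S) \<subseteq> Y" unfolding H(2)
      by (rule ordD[OF int_lattice_I[OF S] A_lat]) (use H S in auto)
  qed
next
  have "f ` S \<subseteq> int_lattice B" using f_in A_lat S by blast
  then have "\<Inter>(f ` S) \<in> int_lattice B" by (rule int_lattice_Inter)
  then obtain Z where Z: "Z \<in> int_lattice A" "f Z = \<Inter>(f ` S)" using f_surj by blast
  have "Z \<subseteq> H" if "H \<in> S" for H
    by (rule ordI[OF Z(1) A_lat]) (use Z S that in auto)
  then have "Z \<subseteq> \<Inter>S" by blast
  then have "f Z \<subseteq> f (\<Inter>S)" using ordD Z int_lattice_I[OF S] by blast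
  then show "\<Inter>(f ` S) \<subseteq> f (\<Inter>S)" using Z by simp
qed

lemma f_UNIV: "f UNIV = UNIV"
  using f_meet[of "{}"] by simp

lemma UNIV_lat: "UNIV \<in> int_lattice A"
  using int_lattice_I[of "{}" A] by simp

lemma f_hyp: assumes H: "H \<in> A" shows "f H \<in> B"
proof -
  have "f H \<noteq> UNIV"
    using f_inj[OF A_lat[OF H] UNIV_lat] f_UNIV arr_not_UNIV[OF arrA H] by auto
  then obtain K where K: "K \<in> B" "f H \<subseteq> K" using lattice_below f_in A_lat H by blast
  obtain Z where Z: "Z \<in> int_lattice A" "f Z = K" using f_surj B_lat K by blast
  have HZ: "H \<subseteq> Z" using ordI[OF A_lat[OF H] Z(1)] Z K by blast
  have "Z \<noteq> UNIV" using Z f_UNIV arr_not_UNIV[OF arrB K(1)] by auto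
  then obtain H' where H': "H' \<in> A" "Z \<subseteq> H'" using lattice_below Z by blast
  have "H = H'" using arr_sub_eq[OF arrA H H'(1)] HZ H' by blast
  then have "Z = H" using HZ H' by blast
  then show ?thesis using Z K by simp
qed

lemma f_hyp_surj: assumes K: "K \<in> B" shows "\<exists>H\<in>A. f H = K"
proof -
  obtain Z where Z: "Z \<in> int_lattice A" "f Z = K" using f_surj B_lat K by blast
  have "Z \<noteq> UNIV" using Z f_UNIV arr_not_UNIV[OF arrB K] by auto
  then obtain H where H: "H \<in> A" "Z \<subseteq> H" using lattice_below Z by blast
  have "K \<subseteq> f H" using ordD[OF Z(1) A_lat[OF H(1)] H(2)] Z by blast
  then have "K = f H" using arr_sub_eq[OF arrB K f_hyp[OF H(1)]] by blast
  then show ?thesis using H by blast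
qed

end

definition grel :: "('n \<Rightarrow> 'n \<Rightarrow> bool) \<Rightarrow> 'n set \<Rightarrow> ('n \<times> 'n) set" where
  "grel E S = {(x, y). x \<in> S \<and> y \<in> S \<and> E x y}"

lemma ic_iff: "induced_connected E I \<longleftrightarrow> I \<noteq> {} \<and> (\<forall>u\<in>I. \<forall>v\<in>I. (u, v) \<in> (grel E I)\<^sup>*)"
  unfolding induced_connected_def grel_def by simp

lemma grel_sym: assumes "simple_graph E" "(a, b) \<in> (grel E S)\<^sup>*" shows "(b, a) \<in> (grel E S)\<^sup>*"
proof -
  have c: "(grel E S)\<inverse> = grel E S" using assms(1) unfolding simple_graph_def grel_def by auto
  have "(b, a) \<in> ((grel E S)\<inverse>)\<^sup>*" using assms(2) by (rule rtrancl_converseI)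
  then show ?thesis using c by simp
qed

lemma grel_restrict:
  assumes "(a, b) \<in> (grel E S)\<^sup>*" "a \<in> C" "C \<subseteq> S" "\<And>x y. x \<in> C \<Longrightarrow> (x, y) \<in> grel E S \<Longrightarrow> y \<in> C"
  shows "(a, b) \<in> (grel E C)\<^sup>* \<and> b \<in> C"
  using assms(1)
proof (induction rule: rtrancl_induct)
  case base then show ?case using assms(2) by simp
next
  case (step y z)
  then have "z \<in> C" using assms(4) by blast
  moreover have "(y, z) \<in> grel E C" using step \<open>z \<in> C\<close> unfolding grel_def by auto
  ultimately show ?case using step(3) rtrancl.rtrancl_into_rtrancl[of a y "grel E C" z] by blast
qed

lemma graph_split:
  assumes sg: "simple_graph E" and ic: "induced_connected E I" and ns: "\<not> (\<exists>v. I = {v})"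
  shows "\<exists>J K. induced_connected E J \<and> induced_connected E K \<and> J \<inter> K = {} \<and> J \<union> K = I"
proof -
  have icI: "I \<noteq> {} \<and> (\<forall>u\<in>I. \<forall>v\<in>I. (u, v) \<in> (grel E I)\<^sup>*)" using ic unfolding ic_iff .
  have Ine: "I \<noteq> {}" using icI by (rule conjunct1)
  have con: "\<forall>u\<in>I. \<forall>v\<in>I. (u, v) \<in> (grel E I)\<^sup>*" using icI by (rule conjunct2)
  obtain u where u: "u \<in> I" using Ine by blast
  have "\<exists>w. w \<in> I \<and> w \<noteq> u"
  proof (rule ccontr)
    assume "\<not> (\<exists>w. w \<in> I \<and> w \<noteq> u)"
    then have "I = {u}" using u by (intro set_eqI) blast
    then have "\<exists>v. I = {v}" by (rule exI)
    then show False using ns by (rule notE[rotated])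
  qed
  then obtain w where w: "w \<in> I" "w \<noteq> u" by blast
  define I' where "I' = I - {u}"
  define J where "J = {x. (w, x) \<in> (grel E I')\<^sup>*}"
  have wJ: "w \<in> J" unfolding J_def by simp
  have Jcl: "y \<in> J" if "x \<in> J" "(x, y) \<in> grel E I'" for x y
    using that unfolding J_def by (simp add: rtrancl.rtrancl_into_rtrancl)
  have JI': "J \<subseteq> I'"
  proof
    fix x assume "x \<in> J"
    then have "(w, x) \<in> (grel E I')\<^sup>*" unfolding J_def by simp
    then show "x \<in> I'"
    proof (cases rule: rtranclE)
      case base then show ?thesis using w unfolding I'_def by simp
    next
      case (step y) then show ?thesis unfolding grel_def by auto
    qed
  qed
  have toJ: "(w, x) \<in> (grel E J)\<^sup>*" if "x \<in> J" for x
  proof -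
    have "(w, x) \<in> (grel E I')\<^sup>*" using that unfolding J_def by simp
    then show ?thesis using grel_restrict[of w x E I' J] wJ JI' Jcl by blast
  qed
  have icJ: "induced_connected E J" unfolding ic_iff
  proof (intro conjI ballI)
    show "J \<noteq> {}" using wJ by blast
  next
    fix x y assume "x \<in> J" "y \<in> J"
    then have a: "(w, x) \<in> (grel E J)\<^sup>*" and b: "(w, y) \<in> (grel E J)\<^sup>*" using toJ by blast+
    have "(x, w) \<in> (grel E J)\<^sup>*" by (rule grel_sym[OF sg a])
    then show "(x, y) \<in> (grel E J)\<^sup>*" using b by (rule rtrancl_trans)
  qed
  define K where "K = I - J"
  have uK: "u \<in> K" using u JI' unfolding K_def I'_def by blast
  have toU: "x \<in> K \<longrightarrow> (x, u) \<in> (grel E K)\<^sup>*" if "(x, u) \<in> (grel E I)\<^sup>*" for x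
    using that
  proof (induction rule: converse_rtrancl_induct)
    case base then show ?case by simp
  next
    case (step x y)
    show ?case
    proof
      assume xK: "x \<in> K"
      show "(x, u) \<in> (grel E K)\<^sup>*"
      proof (cases "x = u")
        case True then show ?thesis by simp
      next
        case False
        have xy: "x \<in> I" "y \<in> I" "E x y" using step(1) unfolding grel_def by auto
        have yK: "y \<in> K"
        proof (rule ccontr)
          assume "y \<notin> K"
          then have yJ: "y \<in> J" using xy unfolding K_def by blast
          have "(y, x) \<in> grel E I'" using xy sg False yJ JI' unfolding grel_def simple_graph_def I'_def by auto
          then have "x \<in> J" using Jcl yJ by blast
          then show False using xK unfolding K_def by blast
        qed
        have "(x, y) \<in> grel E K" using xK yK xy(3) unfolding grel_def by auto
        moreover have "(y, u) \<in> (grel E K)\<^sup>*" using step(3) yK by blast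
        ultimately show ?thesis by (rule converse_rtrancl_into_rtrancl)
      qed
    qed
  qed
  have icK: "induced_connected E K" unfolding ic_iff
  proof (intro conjI ballI)
    show "K \<noteq> {}" using uK by blast
  next
    fix x y assume xK: "x \<in> K" and yK: "y \<in> K"
    have "x \<in> I" "y \<in> I" using xK yK unfolding K_def by auto
    then have "(x, u) \<in> (grel E I)\<^sup>*" "(y, u) \<in> (grel E I)\<^sup>*" using con u by blast+
    then have a: "(x, u) \<in> (grel E K)\<^sup>*" and b: "(y, u) \<in> (grel E K)\<^sup>*" using toU xK yK by blast+
    have "(u, y) \<in> (grel E K)\<^sup>*" by (rule grel_sym[OF sg b])
    with a show "(x, y) \<in> (grel E K)\<^sup>*" by (rule rtrancl_trans)
  qed
  have "J \<inter> K = {}" "J \<union> K = I" using JI' unfolding K_def I'_def by auto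
  then show ?thesis using icJ icK by blast
qed

definition ind_vec :: "'n set \<Rightarrow> 'a::field^'n::finite" where
  "ind_vec I = (\<chi> i. if i \<in> I then 1 else 0)"

lemma H_I_kernel: "(H_I I :: ('a::field^'n::finite) set) = kernel_form (ind_vec I)"
proof -
  have "lform (ind_vec I) x = (\<Sum>i\<in>I. x $ i)" for x :: "'a^'n"
  proof -
    have "lform (ind_vec I) x = (\<Sum>i\<in>UNIV. if i \<in> I then x $ i else 0)"
      unfolding lform_def ind_vec_def by (rule sum.cong) auto
    also have "\<dots> = (\<Sum>i\<in>UNIV \<inter> I. x $ i)" by (rule sum.inter_restrict[symmetric]) simp
    finally show ?thesis by simp
  qed
  then show ?thesis unfolding H_I_def kernel_form_def by simp
qed

lemma ind_vec_nz: "I \<noteq> {} \<Longrightarrow> (ind_vec I :: 'a::field^'n::finite) \<noteq> 0"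
proof
  assume "I \<noteq> {}" "(ind_vec I :: 'a^'n) = 0"
  then obtain i where "i \<in> I" by blast
  then have "(ind_vec I :: 'a^'n) $ i = 1" unfolding ind_vec_def by simp
  then show False using \<open>ind_vec I = 0\<close> by simp
qed

lemma axis_H_I: "(axis v 1 :: 'a::field^'n::finite) \<in> H_I I \<longleftrightarrow> v \<notin> I"
proof -
  have "(\<Sum>i\<in>I. (axis v 1 :: 'a^'n) $ i) = (\<Sum>i\<in>I. if v = i then 1 else 0)"
    by (rule sum.cong) (auto simp: axis_def)
  also have "\<dots> = (if v \<in> I then 1 else 0)" using sum.delta'[of I v "\<lambda>_. 1::'a"] by simp
  finally show ?thesis unfolding H_I_def by simp
qed

lemma H_I_inj: assumes "(H_I I :: ('a::field^'n::finite) set) = H_I J" shows "I = J"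
proof (rule ccontr)
  assume "I \<noteq> J"
  then obtain v where "(v \<in> I \<and> v \<notin> J) \<or> (v \<in> J \<and> v \<notin> I)" by blast
  then show False using assms axis_H_I[of v I, where 'a='a] axis_H_I[of v J, where 'a='a] by auto
qed

lemma arr_graphic: "arrangement (graphic_arr E :: ('a::field^'n::finite) set set)"
  unfolding arrangement_def
proof
  have "(graphic_arr E :: ('a^'n) set set) \<subseteq> H_I ` UNIV" unfolding graphic_arr_def by blast
  then show "finite (graphic_arr E :: ('a^'n) set set)" by (rule finite_subset) simp
next
  show "\<forall>H\<in>(graphic_arr E :: ('a^'n) set set). \<exists>a. a \<noteq> 0 \<and> H = kernel_form a"
    unfolding graphic_arr_def using H_I_kernel ind_vec_nz by blast
qed

lemma H_I_in: "induced_connected E I \<Longrightarrow> (H_I I :: ('a::field^'n::finite) set) \<in> graphic_arr E"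
  unfolding graphic_arr_def induced_connected_def by blast

lemma singleton_ic: "induced_connected E {v}"
  unfolding induced_connected_def by simp

lemma main_iso:
  fixes E :: "'n::finite \<Rightarrow> 'n \<Rightarrow> bool" and B :: "('a::field^'m::finite) set set"
  assumes sg: "simple_graph E" and arrB: "arrangement B"
    and iso: "lattice_iso (graphic_arr E :: ('a^'n) set set) B"
  shows "formal B"
proof -
  let ?A = "graphic_arr E :: ('a^'n) set set"
  obtain f where bij: "bij_betw f (int_lattice ?A) (int_lattice B)"
    and ord: "\<forall>X\<in>int_lattice ?A. \<forall>Y\<in>int_lattice ?A. X \<subseteq> Y \<longleftrightarrow> f X \<subseteq> f Y"
    using iso unfolding lattice_iso_def by blast
  interpret liso ?A B f using arr_graphic arrB bij ord by unfold_locales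
  define \<psi> where "\<psi> = (\<lambda>I. f (H_I I :: ('a^'n) set))"
  let ?Idx = "{I. induced_connected E I}"
  let ?BI = "range (\<lambda>v::'n. {v})"
  show ?thesis
  proof (rule formal_criterion[where \<psi> = \<psi> and Idx = ?Idx and BI = ?BI and \<rho> = card])
    show "finite B" using arrB unfolding arrangement_def by simp
  next
    show "B = \<psi> ` ?Idx"
    proof (rule set_eqI)
      fix K show "K \<in> B \<longleftrightarrow> K \<in> \<psi> ` ?Idx"
      proof
        assume "K \<in> B"
        then obtain H where H: "H \<in> ?A" "f H = K" using f_hyp_surj by blast
        then obtain I where "H = H_I I" "induced_connected E I" unfolding graphic_arr_def by blast
        then show "K \<in> \<psi> ` ?Idx" using H unfolding \<psi>_def by blast
      next
        assume "K \<in> \<psi> ` ?Idx"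
        then obtain I where "induced_connected E I" "K = \<psi> I" by blast
        then show "K \<in> B" unfolding \<psi>_def using f_hyp H_I_in by blast
      qed
    qed
  next
    show "?BI \<subseteq> ?Idx" using singleton_ic[of E] by blast
  next
    fix \<alpha> g
    assume al: "\<forall>H\<in>B. \<alpha> H \<noteq> 0 \<and> H = kernel_form (\<alpha> H)" and rel: "is_relation B \<alpha> g"
      and supp: "\<forall>H. g H \<noteq> 0 \<longrightarrow> H \<in> \<psi> ` ?BI"
    show "\<forall>H. g H = 0"
    proof (rule ccontr)
      assume "\<not> (\<forall>H. g H = 0)"
      then obtain K0 where gK0: "g K0 \<noteq> 0" by blast
      then obtain v where K0: "K0 = \<psi> {v}" using supp by blast
      have K0B: "K0 \<in> B" using rel gK0 unfolding is_relation_def by blast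
      define S where "S = (\<lambda>w. H_I {w} :: ('a^'n) set) ` (UNIV - {v})"
      have SA: "S \<subseteq> ?A"
      proof
        fix H assume "H \<in> S"
        then obtain w where "H = H_I {w}" unfolding S_def by blast
        then show "H \<in> ?A" using H_I_in[OF singleton_ic] by simp
      qed
      have sub: "\<Inter>(f ` S) \<subseteq> K0"
      proof
        fix y assume y: "y \<in> \<Inter>(f ` S)"
        have zero: "g K * lform (\<alpha> K) y = 0" if K: "K \<in> B - {K0}" for K
        proof (cases "g K = 0")
          case False
          then have "K \<in> \<psi> ` ?BI" using supp by simp
          then obtain w where w: "K = \<psi> {w}" by blast
          have "w \<noteq> v"
          proof
            assume "w = v"
            then have "K = K0" using w K0 by simp
            then show False using K by simp
          qed
          then have "(H_I {w} :: ('a^'n) set) \<in> S" unfolding S_def by blast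
          then have "K \<in> f ` S" unfolding w \<psi>_def by (rule imageI)
          then have "y \<in> K" using y by blast
          then have "lform (\<alpha> K) y = 0" using al K unfolding kernel_form_def by blast
          then show ?thesis by simp
        qed simp
        have "lform (\<Sum>K\<in>B. g K *s \<alpha> K) y = 0" using rel unfolding is_relation_def
          by (simp add: lform_zero_left)
        then have "(\<Sum>K\<in>B. g K * lform (\<alpha> K) y) = 0"
          using arrB unfolding arrangement_def by (simp add: lform_sum_left)
        moreover have "(\<Sum>K\<in>B. g K * lform (\<alpha> K) y) = g K0 * lform (\<alpha> K0) y + (\<Sum>K\<in>B - {K0}. g K * lform (\<alpha> K) y)"
          using arrB K0B unfolding arrangement_def by (simp add: sum.remove)
        moreover have "(\<Sum>K\<in>B - {K0}. g K * lform (\<alpha> K) y) = 0" by (rule sum.neutral) (use zero in blast)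
        ultimately have "lform (\<alpha> K0) y = 0" using gK0 by simp
        then show "y \<in> K0" using al K0B unfolding kernel_form_def by blast
      qed
      have "f (\<Inter>S) \<subseteq> f (H_I {v})" using sub f_meet[OF SA] K0 unfolding \<psi>_def by simp
      then have "\<Inter>S \<subseteq> H_I {v}"
        by (rule ordI[OF int_lattice_I[OF SA] A_lat[OF H_I_in[OF singleton_ic]]])
      moreover have "(axis v 1 :: 'a^'n) \<in> \<Inter>S" unfolding S_def by (auto simp: axis_H_I)
      moreover have "(axis v 1 :: 'a^'n) \<notin> H_I {v}" by (simp add: axis_H_I)
      ultimately show False by blast
    qed
  next
    fix I assume I: "I \<in> ?Idx - ?BI"
    then have icI: "induced_connected E I" and ns: "\<not> (\<exists>v. I = {v})" by blast+
    obtain J K where JK: "induced_connected E J" "induced_connected E K" "J \<inter> K = {}" "J \<union> K = I"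
      using graph_split[OF sg icI ns] by blast
    have Jne: "J \<noteq> {}" and Kne: "K \<noteq> {}" using JK(1,2) unfolding induced_connected_def by blast+
    have "J \<subset> I" using JK Kne by blast
    then have cJ: "card J < card I" by (rule psubset_card_mono[OF finite])
    have "K \<subset> I" using JK Jne by blast
    then have cK: "card K < card I" by (rule psubset_card_mono[OF finite])
    have JneK: "J \<noteq> K" using JK(3) Jne by blast
    have HJ: "(H_I J :: ('a^'n) set) \<in> int_lattice ?A" using A_lat H_I_in JK(1) by blast
    have HK: "(H_I K :: ('a^'n) set) \<in> int_lattice ?A" using A_lat H_I_in JK(2) by blast
    have HI: "(H_I I :: ('a^'n) set) \<in> int_lattice ?A" using A_lat H_I_in icI by blast
    have "\<psi> J \<noteq> \<psi> K"
    proof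
      assume "\<psi> J = \<psi> K"
      then have "(H_I J :: ('a^'n) set) = H_I K" using f_inj HJ HK unfolding \<psi>_def by blast
      then show False using H_I_inj JneK by blast
    qed
    moreover have "\<psi> J \<inter> \<psi> K \<subseteq> \<psi> I"
    proof -
      have SA: "{H_I J, H_I K} \<subseteq> ?A" using H_I_in JK(1,2) by blast
      have m: "f (H_I J \<inter> H_I K) = \<psi> J \<inter> \<psi> K" using f_meet[OF SA] unfolding \<psi>_def by simp
      have "(H_I J :: ('a^'n) set) \<inter> H_I K \<subseteq> H_I I"
      proof
        fix x :: "'a^'n" assume "x \<in> H_I J \<inter> H_I K"
        then have "(\<Sum>i\<in>J. x $ i) = 0" "(\<Sum>i\<in>K. x $ i) = 0" unfolding H_I_def by auto
        moreover have "(\<Sum>i\<in>I. x $ i) = (\<Sum>i\<in>J. x $ i) + (\<Sum>i\<in>K. x $ i)"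
          using JK(3,4) sum.union_disjoint[of J K "\<lambda>i. x $ i"] by simp
        ultimately show "x \<in> H_I I" unfolding H_I_def by simp
      qed
      then have "f (H_I J \<inter> H_I K) \<subseteq> f (H_I I)"
        using ordD int_lattice_I[OF SA] HI by simp
      then show ?thesis using m unfolding \<psi>_def by simp
    qed
    ultimately show "\<exists>j k. j \<in> ?Idx \<and> k \<in> ?Idx \<and> card j < card I \<and> card k < card I \<and>
        \<psi> j \<noteq> \<psi> k \<and> \<psi> j \<inter> \<psi> k \<subseteq> \<psi> I"
      using JK(1,2) cJ cK by blast
  qed
qed

theorem mainTheorem12:
  fixes E :: "'n::finite \<Rightarrow> 'n \<Rightarrow> bool"
  assumes "simple_graph E"
    and "graph_connected E"
  shows "formal (graphic_arr E :: ('a::field ^ 'n) set set) \<and>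
    (\<forall>B :: ('a ^ 'm::finite) set set.
       arrangement B \<and> lattice_iso (graphic_arr E :: ('a ^ 'n) set set) B \<longrightarrow> formal B)"
proof
  have "lattice_iso (graphic_arr E :: ('a ^ 'n) set set) (graphic_arr E :: ('a ^ 'n) set set)"
  proof -
    have "bij_betw (\<lambda>X. X) (int_lattice (graphic_arr E :: ('a ^ 'n) set set)) (int_lattice (graphic_arr E :: ('a ^ 'n) set set))"
      by (simp add: bij_betw_def inj_on_def)
    then show ?thesis unfolding lattice_iso_def by blast
  qed
  then show "formal (graphic_arr E :: ('a::field ^ 'n) set set)"
    using main_iso[OF assms(1) arr_graphic] by blast
next
  show "\<forall>B :: ('a ^ 'm::finite) set set.
       arrangement B \<and> lattice_iso (graphic_arr E :: ('a ^ 'n) set set) B \<longrightarrow> formal B"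
    using main_iso[OF assms(1)] by blast
qed

end
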